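(* In the setting $|H|=1$ of the context (with Assumption 1), the convex relaxation (R1) is exact (its optimal value equals $c^\star$) if the following convex set of $(\boldsymbol{\mu},{\bf x},w_1)\in\mathbb{R}^m\times\mathbb{R}^n\times\mathbb{R}$ is empty: $d_1^*+\sum_{i\in M}\xi_i\mu_i=0$; $c_1+\sum_{i\in M}a_{i1}\mu_i=0$; $(D_{jj}-d_1^* )x_j+c_j+\sum_{i\in M}a_{ij}\mu_i=0$ for $j\in N\setminus\{1\}$; $\xi_iw_1+2\sum_{j\in N}a_{ij}x_j\le b_i$ for $i\in M$; $\sum_{j\in N}x_j^2\le w_1$; $\mu_i\ge 0$ for $i\in M$.
   Context: Let $N=\{1,\dots,n\}$, $M=\{1,\dots,m\}$. Data: reals $D_{jj}$ ($j\in N$), $c_j$, $a_{ij}$, $b_i$, $\xi_i$ ($i\in M$, $j\in N$). The diagonal QCQP (P) is $c^\star=\inf\{\sum_{j}D_{jj}x_j^2+2\sum_jc_jx_j : \xi_i\sum_jx_j^2+2\sum_ja_{ij}x_j\le b_i,\ i\in M\}$, i.e. all constraint Hessians are ${\bf A}^i=\xi_i{\bf I}$. Its Shor relaxation is $v^\star=\inf\{{\bf D}\bullet{\bf X}+2{\bf c}^\top{\bf x} : \xi_i\,\mathrm{trace}({\bf X})+2{\bf a}_i^\top{\bf x}\le b_i\ (i\in M),\ {\bf X}-{\bf x}{\bf x}^\top\succeq{\bf O}\}$ with ${\bf D}=\mathrm{diag}(D_{jj})$. Assumption 1: (P) is feasible; some $\bar{\bf y}\ge0$ has $\sum_i\bar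 y_i\xi_i>0$; the Shor relaxation has a feasible point in the interior of its feasible region. It is assumed that $d_1^*=\min_{j\in N}D_{jj}$ is attained uniquely at $j=1$. The convex relaxation (R1) is: $\min\ d_1^*w_1+\sum_{j\in N}(D_{jj}-d_1^* )x_j^2+2\sum_{j\in N}c_jx_j$ s.t. $\xi_iw_1+2\sum_{j\in N}a_{ij}x_j\le b_i$ ($i\in M$), $\sum_{j\in N}x_j^2\le w_1$; its optimal value equals $v^\star$. *)

theory Defs
  imports "HOL-Analysis.Analysis"
begin

text \<open>Index sets N and M are the finite types 'n and 'm. The data are
  D (diagonal of the objective Hessian), c :: real^'n, a :: real^'n^'m
  (a $ i $ j = a_ij), b, xi :: real^'m. The distinguished index j1 plays
  the role of j = 1.\<close>

definition P_feasible :: "real^'n^'m \<Rightarrow> real^'m \<Rightarrow> real^'m \<Rightarrow> real^'n \<Rightarrow> bool" where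
  "P_feasible a b xi x \<longleftrightarrow>
     (\<forall>i. xi $ i * (\<Sum>j\<in>UNIV. (x $ j)^2) + 2 * (\<Sum>j\<in>UNIV. a $ i $ j * x $ j) \<le> b $ i)"

definition P_obj :: "real^'n \<Rightarrow> real^'n \<Rightarrow> real^'n \<Rightarrow> real" where
  "P_obj D c x = (\<Sum>j\<in>UNIV. D $ j * (x $ j)^2) + 2 * (\<Sum>j\<in>UNIV. c $ j * x $ j)"

definition c_star :: "real^'n \<Rightarrow> real^'n \<Rightarrow> real^'n^'m \<Rightarrow> real^'m \<Rightarrow> real^'m \<Rightarrow> ereal" where
  "c_star D c a b xi = (INF x\<in>{x. P_feasible a b xi x}. ereal (P_obj D c x))"

definition psd :: "real^'n^'n \<Rightarrow> bool" where
  "psd A \<longleftrightarrow> transpose A = A \<and> (\<forall>v. v \<bullet> (A *v v) \<ge> 0)"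

definition Shor_feasible :: "real^'n^'m \<Rightarrow> real^'m \<Rightarrow> real^'m \<Rightarrow> real^'n^'n \<Rightarrow> real^'n \<Rightarrow> bool" where
  "Shor_feasible a b xi X x \<longleftrightarrow>
     transpose X = X \<and>
     (\<forall>i. xi $ i * (\<Sum>j\<in>UNIV. X $ j $ j) + 2 * (\<Sum>j\<in>UNIV. a $ i $ j * x $ j) \<le> b $ i) \<and>
     psd (X - (\<chi> k l. x $ k * x $ l))"

definition Shor_interior_point :: "real^'n^'m \<Rightarrow> real^'m \<Rightarrow> real^'m \<Rightarrow> bool" where
  "Shor_interior_point a b xi \<longleftrightarrow>
     (\<exists>X x e. e > 0 \<and> Shor_feasible a b xi X x \<and>
        (\<forall>Y y. transpose Y = Y \<and> dist (Y, y) (X, x) < e \<longrightarrow> Shor_feasible a b xi Y y))"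

definition assumption1 :: "real^'n^'m \<Rightarrow> real^'m \<Rightarrow> real^'m \<Rightarrow> bool" where
  "assumption1 a b xi \<longleftrightarrow>
     (\<exists>x::real^'n. P_feasible a b xi x) \<and>
     (\<exists>y::real^'m. (\<forall>i. y $ i \<ge> 0) \<and> (\<Sum>i\<in>UNIV. y $ i * xi $ i) > 0) \<and>
     Shor_interior_point a b xi"

text \<open>Relaxation (R1), with d1* = D $ j1; variables (x, w1).\<close>
definition R1_feasible :: "real^'n^'m \<Rightarrow> real^'m \<Rightarrow> real^'m \<Rightarrow> real^'n \<Rightarrow> real \<Rightarrow> bool" where
  "R1_feasible a b xi x w1 \<longleftrightarrow>
     (\<forall>i. xi $ i * w1 + 2 * (\<Sum>j\<in>UNIV. a $ i $ j * x $ j) \<le> b $ i) \<and>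
     (\<Sum>j\<in>UNIV. (x $ j)^2) \<le> w1"

definition R1_obj :: "real^'n \<Rightarrow> real^'n \<Rightarrow> 'n \<Rightarrow> real^'n \<Rightarrow> real \<Rightarrow> real" where
  "R1_obj D c j1 x w1 = D $ j1 * w1 + (\<Sum>j\<in>UNIV. (D $ j - D $ j1) * (x $ j)^2)
      + 2 * (\<Sum>j\<in>UNIV. c $ j * x $ j)"

definition R1_value :: "real^'n \<Rightarrow> real^'n \<Rightarrow> real^'n^'m \<Rightarrow> real^'m \<Rightarrow> real^'m \<Rightarrow> 'n \<Rightarrow> ereal" where
  "R1_value D c a b xi j1 =
     (INF p\<in>{(x, w1). R1_feasible a b xi x w1}. ereal (R1_obj D c j1 (fst p) (snd p)))"

definition certificate_set :: "real^'n \<Rightarrow> real^'n \<Rightarrow> real^'n^'m \<Rightarrow> real^'m \<Rightarrow> real^'m \<Rightarrow> 'n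
     \<Rightarrow> ((real^'m) \<times> (real^'n) \<times> real) set" where
  "certificate_set D c a b xi j1 = {(mu::real^'m, x::real^'n, w1::real).
     D $ j1 + (\<Sum>i\<in>UNIV. xi $ i * mu $ i) = 0 \<and>
     c $ j1 + (\<Sum>i\<in>UNIV. a $ i $ j1 * mu $ i) = 0 \<and>
     (\<forall>j. j \<noteq> j1 \<longrightarrow> (D $ j - D $ j1) * x $ j + c $ j + (\<Sum>i\<in>UNIV. a $ i $ j * mu $ i) = 0) \<and>
     (\<forall>i. xi $ i * w1 + 2 * (\<Sum>j\<in>UNIV. a $ i $ j * x $ j) \<le> b $ i) \<and>
     (\<Sum>j\<in>UNIV. (x $ j)^2) \<le> w1 \<and>
     (\<forall>i. mu $ i \<ge> 0)}"

end

theory Submission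
  imports Defs
begin


lemma sumsq_norm: "(\<Sum>j\<in>UNIV. ((x::real^'n) $ j)^2) = norm x ^ 2"
  unfolding power2_norm_eq_inner by (simp add: inner_vec_def power2_eq_square)

lemma sum_in_convex_cone:
  assumes "convex_cone C" "finite A" "\<And>i. i \<in> A \<Longrightarrow> f i \<in> C"
  shows "sum f A \<in> C"
  using assms(2,3)
proof (induction A rule: finite_induct)
  case empty then show ?case using assms(1) by (simp add: convex_cone_contains_0)
next
  case (insert x F) then show ?case using assms(1) by (simp add: convex_cone_add)
qed

lemma small_t:
  fixes p q r ss dd :: real
  assumes "p < 0" "dd > 0"
  shows "\<exists>t>0. t*p + t^2 * q < 0 \<and> (t*r + t^2 * ss) \<le> dd"
proof -
  define Q where "Q = 2*(\<bar>q\<bar>+1)"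
  define R where "R = 2*(\<bar>r\<bar>+\<bar>ss\<bar>+1)"
  have Q: "Q > 0" and R: "R > 0" by (simp_all add: Q_def R_def add_pos_nonneg)
  define t where "t = min 1 (min (-p/Q) (dd/R))"
  have t0: "t > 0" using assms Q R by (simp add: t_def divide_neg_pos)
  have t1: "t \<le> 1" by (simp add: t_def)
  have "t \<le> -p/Q" by (simp add: t_def)
  hence t2: "t * Q \<le> -p" using Q by (metis pos_le_divide_eq minus_divide_left)
  have "t \<le> dd/R" by (simp add: t_def)
  hence t3: "t * R \<le> dd" using R by (simp add: le_divide_eq)
  have e1: "t^2 * q \<le> t * (t*\<bar>q\<bar>)"
    using t0 by (simp add: power2_eq_square mult_left_mono)
  have "t*\<bar>q\<bar> \<le> -p/2" using t2 t0 unfolding Q_def by (simp add: algebra_simps)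
  hence e2: "t * (t*\<bar>q\<bar>) \<le> t*(-p/2)" using t0 by (metis less_imp_le mult_left_mono)
  have e3: "t*p < 0" using t0 assms(1) by (simp add: mult_pos_neg)
  have A: "t*p + t^2 * q < 0" using e1 e2 e3 by linarith
  have f1: "t*r \<le> t*\<bar>r\<bar>" using t0 by (simp add: mult_left_mono)
  have f2: "t^2 * ss \<le> t * (t*\<bar>ss\<bar>)" using t0 by (simp add: power2_eq_square mult_left_mono)
  have "t*\<bar>ss\<bar> \<le> \<bar>ss\<bar>" using t0 t1 by (simp add: mult_left_le_one_le)
  hence f3: "t * (t*\<bar>ss\<bar>) \<le> t*\<bar>ss\<bar>" using t0 by (simp add: mult_left_mono)
  have "0 \<le> t*\<bar>r\<bar>" "0 \<le> t*\<bar>ss\<bar>" using t0 by simp_all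
  moreover have "t*R = 2*t + 2*(t*\<bar>r\<bar>) + 2*(t*\<bar>ss\<bar>)" by (simp add: R_def algebra_simps)
  ultimately have f4: "t*\<bar>r\<bar> + t*\<bar>ss\<bar> \<le> dd" using t3 t0 by linarith
  show ?thesis using A f1 f2 f3 f4 t0 by (intro exI[of _ t]) linarith
qed



lemma R1_bounded:
  fixes a :: "real^'n^'m" and y b xi :: "real^'m"
  assumes y0: "\<forall>i. y$i \<ge> 0" and ys: "(\<Sum>i\<in>UNIV. y$i * xi$i) > 0"
  shows "bounded {z::(real^'n)\<times>real. R1_feasible a b xi (fst z) (snd z)}"
proof -
  define s where "s = (\<Sum>i\<in>UNIV. y$i * xi$i)"
  define B where "B = (\<Sum>i\<in>UNIV. y$i * b$i)"
  define u :: "real^'n" where "u = (\<chi> j. \<Sum>i\<in>UNIV. y$i * a$i$j)"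
  define U where "U = norm u"
  define Rr where "Rr = 1 + (\<bar>B\<bar> + 2*U)/s"
  define W where "W = (\<bar>B\<bar> + 2*U*Rr)/s"
  have s0: "s > 0" using ys by (simp add: s_def)
  have U0: "U \<ge> 0" by (simp add: U_def)
  have Rr1: "Rr \<ge> 1" using s0 U0 by (simp add: Rr_def)
  have key: "norm x \<le> Rr \<and> w \<le> W \<and> 0 \<le> w" if f: "R1_feasible a b xi x w" for x w
  proof -
    have c1: "\<And>i. xi$i * w + 2 * (\<Sum>j\<in>UNIV. a$i$j * x$j) \<le> b$i" and c2: "norm x ^ 2 \<le> w"
      using f by (auto simp: R1_feasible_def sumsq_norm)
    have "(\<Sum>i\<in>UNIV. y$i * (xi$i * w + 2 * (\<Sum>j\<in>UNIV. a$i$j * x$j))) \<le> B"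
      unfolding B_def using c1 y0 by (intro sum_mono mult_left_mono) auto
    moreover have sw: "(\<Sum>i\<in>UNIV. y$i * (\<Sum>j\<in>UNIV. a$i$j * x$j)) = u \<bullet> x"
    proof -
      have "(\<Sum>i\<in>UNIV. y$i * (\<Sum>j\<in>UNIV. a$i$j * x$j)) = (\<Sum>i\<in>UNIV. \<Sum>j\<in>UNIV. y$i * a$i$j * x$j)"
        by (simp add: sum_distrib_left mult.assoc)
      also have "\<dots> = (\<Sum>j\<in>UNIV. \<Sum>i\<in>UNIV. y$i * a$i$j * x$j)" by (rule sum.swap)
      also have "\<dots> = u \<bullet> x" by (simp add: u_def inner_vec_def sum_distrib_right)
      finally show ?thesis .
    qed
    moreover have "(\<Sum>i\<in>UNIV. y$i * (xi$i * w + 2 * (\<Sum>j\<in>UNIV. a$i$j * x$j))) = s*w + 2*(\<Sum>i\<in>UNIV. y$i * (\<Sum>j\<in>UNIV. a$i$j * x$j))"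
      by (simp add: s_def algebra_simps sum.distrib sum_distrib_left sum_distrib_right)
    ultimately have e1: "s*w + 2*(u \<bullet> x) \<le> B" by simp
    have "u \<bullet> x \<ge> - (U * norm x)" using norm_cauchy_schwarz[of "-u" x] by (simp add: U_def)
    hence e2: "s*w \<le> \<bar>B\<bar> + 2*U*norm x" using e1 by linarith
    have e3: "s * norm x ^ 2 \<le> s*w" using c2 s0 by simp
    have nx: "norm x \<le> Rr"
    proof (cases "norm x \<le> 1")
      case True then show ?thesis using Rr1 by linarith
    next
      case False
      hence "\<bar>B\<bar> \<le> \<bar>B\<bar> * norm x" by (simp add: mult_le_cancel_left1)
      hence "s * norm x * norm x \<le> (\<bar>B\<bar> + 2*U) * norm x" using e2 e3 by (simp add: power2_eq_square algebra_simps)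
      hence "s * norm x \<le> \<bar>B\<bar> + 2*U" using False by (meson mult_right_le_imp_le not_le less_trans zero_less_one)
      hence "norm x \<le> (\<bar>B\<bar> + 2*U)/s" using s0 by (simp add: pos_le_divide_eq mult.commute)
      then show ?thesis by (simp add: Rr_def)
    qed
    have "2*U*norm x \<le> 2*U*Rr" using nx U0 by (simp add: mult_left_mono)
    hence "s*w \<le> \<bar>B\<bar> + 2*U*Rr" using e2 by linarith
    hence "w \<le> W" using s0 by (simp add: W_def pos_le_divide_eq mult.commute)
    moreover have "0 \<le> w" using c2 zero_le_power2[of "norm x"] by linarith
    ultimately show ?thesis using nx by simp
  qed
  show ?thesis unfolding bounded_iff
  proof (intro exI ballI)
    fix z :: "(real^'n) \<times> real" assume "z \<in> {z. R1_feasible a b xi (fst z) (snd z)}"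
    then have k: "norm (fst z) \<le> Rr" "snd z \<le> W" "0 \<le> snd z" using key by auto
    have "norm z \<le> norm (fst z) + norm (snd z)" using norm_Pair_le[of "fst z" "snd z"] by simp
    then show "norm z \<le> Rr + W" using k by simp
  qed
qed



lemma farkas_cone:
  fixes nv :: "'m::finite \<Rightarrow> 'v::euclidean_space" and g :: 'v
  assumes H: "\<And>h. (\<forall>i. nv i \<bullet> h \<le> 0) \<Longrightarrow> g \<bullet> h \<ge> 0"
  shows "\<exists>mu. (\<forall>i. mu i \<ge> 0) \<and> (\<Sum>i\<in>UNIV. mu i *\<^sub>R nv i) = -g"
proof (rule ccontr)
  assume nex: "\<not> ?thesis"
  define K where "K = {(\<Sum>i\<in>UNIV. mu i *\<^sub>R nv i) | mu. \<forall>i. mu i \<ge> (0::real)}"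
  have ccK: "convex_cone K" unfolding convex_cone_iff
  proof (intro conjI ballI allI impI)
    show "0 \<in> K" unfolding K_def by (rule CollectI, rule exI[of _ "\<lambda>i. 0"]) simp
  next
    fix x y assume "x \<in> K" "y \<in> K"
    then obtain m1 m2 where "x = (\<Sum>i\<in>UNIV. m1 i *\<^sub>R nv i)" "\<forall>i. m1 i \<ge> 0"
      "y = (\<Sum>i\<in>UNIV. m2 i *\<^sub>R nv i)" "\<forall>i. m2 i \<ge> 0" unfolding K_def by auto
    then show "x + y \<in> K" unfolding K_def
      by (intro CollectI exI[of _ "\<lambda>i. m1 i + m2 i"]) (auto simp: scaleR_add_left sum.distrib)
  next
    fix x and c :: real assume "x \<in> K" "0 \<le> c"
    then obtain m1 where "x = (\<Sum>i\<in>UNIV. m1 i *\<^sub>R nv i)" "\<forall>i. m1 i \<ge> 0" unfolding K_def by auto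
    then show "c *\<^sub>R x \<in> K" unfolding K_def using \<open>0 \<le> c\<close>
      by (intro CollectI exI[of _ "\<lambda>i. c * m1 i"]) (auto simp: scaleR_sum_right)
  qed
  have Kh: "K = convex_cone hull (range nv)"
  proof
    show "K \<subseteq> convex_cone hull (range nv)"
    proof
      fix x assume "x \<in> K"
      then obtain m1 where x: "x = (\<Sum>i\<in>UNIV. m1 i *\<^sub>R nv i)" "\<forall>i. m1 i \<ge> 0" unfolding K_def by auto
      show "x \<in> convex_cone hull (range nv)" unfolding x(1)
        by (rule sum_in_convex_cone[OF convex_cone_convex_cone_hull]) (simp_all add: convex_cone_hull_mul hull_inc x(2))
    qed
  next
    have "range nv \<subseteq> K"
    proof
      fix x assume "x \<in> range nv"
      then obtain k where k: "x = nv k" by auto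
      have "x = (\<Sum>i\<in>UNIV. (if i = k then 1 else 0) *\<^sub>R nv i)" 
      proof -
        have "(\<Sum>i\<in>UNIV. (if i = k then 1 else 0) *\<^sub>R nv i) = (\<Sum>i\<in>UNIV. if i = k then nv i else 0)"
          by (rule sum.cong) auto
        then show ?thesis by (simp add: k)
      qed
      then show "x \<in> K" unfolding K_def by force
    qed
    then show "convex_cone hull (range nv) \<subseteq> K" using ccK by (intro hull_minimal) auto
  qed
  have clK: "closed K" unfolding Kh by (rule closed_convex_cone_hull) simp
  have cvK: "convex K" using ccK by (simp add: convex_cone_def)
  have "-g \<notin> K" using nex unfolding K_def by auto
  then obtain al be where ab: "al \<bullet> (-g) < be" "\<forall>x\<in>K. al \<bullet> x > be"
    using separating_hyperplane_closed_point[OF cvK clK] by blast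
  have "0 \<in> K" using ccK by (simp add: convex_cone_contains_0)
  hence be0: "be < 0" using ab(2) by force
  have nvK: "nv i \<in> K" for i using Kh hull_inc[of "nv i" "range nv"] by auto
  have pos: "al \<bullet> nv i \<ge> 0" for i
  proof (rule ccontr)
    assume "\<not> al \<bullet> nv i \<ge> 0"
    hence ng: "al \<bullet> nv i < 0" by simp
    define t where "t = be / (al \<bullet> nv i)"
    have "t \<ge> 0" using ng be0 by (simp add: t_def divide_neg_neg less_imp_le)
    hence "t *\<^sub>R nv i \<in> K" using ccK nvK by (simp add: convex_cone_scaleR)
    hence "al \<bullet> (t *\<^sub>R nv i) > be" using ab(2) by blast
    moreover have "al \<bullet> (t *\<^sub>R nv i) = be" using ng by (simp add: t_def)
    ultimately show False by simp
  qed
  have "g \<bullet> (-al) \<ge> 0" using pos by (intro H) (simp add: inner_commute)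
  then show False using ab(1) be0 by (simp add: inner_commute)
qed



lemma inner_pair_expand: "(u::(real^'n)\<times>real) \<bullet> v = (\<Sum>j\<in>UNIV. fst u $ j * fst v $ j) + snd u * snd v"
  by (simp add: inner_prod_def inner_vec_def)

theorem proposition3:
  fixes D c :: "real^'n" and a :: "real^'n^'m" and b xi :: "real^'m" and j1 :: 'n
  assumes "assumption1 a b xi"
    and "\<forall>j. j \<noteq> j1 \<longrightarrow> D $ j1 < D $ j"
    and "certificate_set D c a b xi j1 = {}"
  shows "R1_value D c a b xi j1 = c_star D c a b xi"
proof -
  from assms(1) obtain x0 y where x0: "P_feasible a b xi x0" and y0: "\<forall>i. y$i\<ge>0" "(\<Sum>i\<in>UNIV. y$i * xi$i) > 0"
    unfolding assumption1_def by auto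
  define S where "S = {z::(real^'n)\<times>real. R1_feasible a b xi (fst z) (snd z)}"
  define F where "F = (\<lambda>z::(real^'n)\<times>real. R1_obj D c j1 (fst z) (snd z))"
  have Sb: "bounded S" using R1_bounded[OF y0] unfolding S_def .
  have Seq: "S = (\<Inter>i. {z. xi$i * snd z + 2*(\<Sum>j\<in>UNIV. a$i$j * fst z $ j) \<le> b$i}) \<inter> {z. (\<Sum>j\<in>UNIV. (fst z $ j)^2) \<le> snd z}"
    by (auto simp: S_def R1_feasible_def)
  have Sc: "closed S" unfolding Seq
    by (intro closed_Int closed_INT ballI closed_Collect_le continuous_intros)
  have Sne: "(x0, \<Sum>j\<in>UNIV. (x0 $ j)^2) \<in> S" using x0 by (simp add: S_def R1_feasible_def P_feasible_def)
  have Fc: "continuous_on S F" unfolding F_def R1_obj_def by (intro continuous_intros)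
  obtain z where zS: "z \<in> S" and zmin: "\<forall>y\<in>S. F z \<le> F y"
    using continuous_attains_inf[OF compact_eq_bounded_closed[THEN iffD2, OF conjI[OF Sb Sc]] _ Fc] Sne by blast
  have RV0: "R1_value D c a b xi j1 = (INF p\<in>S. ereal (F p))"
    unfolding R1_value_def F_def S_def by (rule arg_cong[where f=Inf]) auto
  have RV: "R1_value D c a b xi j1 = ereal (F z)" unfolding RV0
    by (rule antisym) (auto intro!: INF_lower zS INF_greatest simp: zmin)
  have FP: "F (x, \<Sum>j\<in>UNIV. (x $ j)^2) = P_obj D c x" for x
    by (simp add: F_def R1_obj_def P_obj_def sum_distrib_left algebra_simps sum.distrib[symmetric] sum_subtractf)
  have le: "R1_value D c a b xi j1 \<le> c_star D c a b xi"
    unfolding c_star_def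
  proof (rule INF_greatest)
    fix x assume "x \<in> {x. P_feasible a b xi x}"
    hence "(x, \<Sum>j\<in>UNIV. (x $ j)^2) \<in> S" by (simp add: S_def R1_feasible_def P_feasible_def)
    hence "F z \<le> F (x, \<Sum>j\<in>UNIV. (x $ j)^2)" using zmin by blast
    then show "R1_value D c a b xi j1 \<le> ereal (P_obj D c x)" using RV FP by simp
  qed
  obtain x w where zxw: "z = (x, w)" by (cases z)
  have lin: "\<And>i. xi$i * w + 2*(\<Sum>j\<in>UNIV. a$i$j * x $ j) \<le> b$i" and quad: "(\<Sum>j\<in>UNIV. (x $ j)^2) \<le> w"
    using zS by (auto simp: S_def R1_feasible_def zxw)
  show ?thesis
  proof (cases "(\<Sum>j\<in>UNIV. (x $ j)^2) = w")
    case True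
    hence "P_feasible a b xi x" using lin by (simp add: P_feasible_def)
    hence "c_star D c a b xi \<le> ereal (P_obj D c x)" unfolding c_star_def by (intro INF_lower) simp
    also have "\<dots> = R1_value D c a b xi j1" using RV FP[of x] True zxw by simp
    finally show ?thesis using le by simp
  next
    case False
    hence gap: "(\<Sum>j\<in>UNIV. (x $ j)^2) < w" using quad by simp
    define nv where "nv i = ((\<chi> j. 2 * a$i$j), xi$i)" for i
    define g where "g = ((\<chi> j. 2 * ((D$j - D$j1) * x$j + c$j)), D$j1)"
    have H: "g \<bullet> h \<ge> 0" if hn: "\<forall>i. nv i \<bullet> h \<le> 0" for h
    proof (rule ccontr)
      assume "\<not> g \<bullet> h \<ge> 0"
      hence p0: "g \<bullet> h < 0" by simp
      obtain hx hw where hxw: "h = (hx, hw)" by (cases h)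
      define q where "q = (\<Sum>j\<in>UNIV. (D$j - D$j1) * (hx$j)^2)"
      define r where "r = 2 * (\<Sum>j\<in>UNIV. x$j * hx$j) - hw"
      define ss where "ss = (\<Sum>j\<in>UNIV. (hx$j)^2)"
      obtain t where t0: "t > 0" and t1: "t * (g \<bullet> h) + t^2 * q < 0"
          and t2: "t*r + t^2 * ss \<le> w - (\<Sum>j\<in>UNIV. (x $ j)^2)"
        using small_t[OF p0, of "w - (\<Sum>j\<in>UNIV. (x $ j)^2)" q r ss] gap by auto
      define z' where "z' = (x + t *\<^sub>R hx, w + t * hw)"
      have z'S: "z' \<in> S"
      proof -
        have "xi$i * (w + t * hw) + 2*(\<Sum>j\<in>UNIV. a$i$j * (x + t *\<^sub>R hx) $ j) \<le> b$i" for i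
        proof -
          have "nv i \<bullet> h = (\<Sum>j\<in>UNIV. 2 * a$i$j * hx$j) + xi$i * hw"
            by (simp add: nv_def hxw inner_pair_expand)
          moreover have "xi$i * (w + t * hw) + 2*(\<Sum>j\<in>UNIV. a$i$j * (x + t *\<^sub>R hx) $ j)
              = (xi$i * w + 2*(\<Sum>j\<in>UNIV. a$i$j * x $ j)) + t * ((\<Sum>j\<in>UNIV. 2 * a$i$j * hx$j) + xi$i * hw)"
            by (simp add: algebra_simps sum.distrib sum_distrib_left)
          moreover have "t * (nv i \<bullet> h) \<le> 0" using hn t0 by (simp add: mult_nonneg_nonpos)
          ultimately have "t * ((\<Sum>j\<in>UNIV. 2 * a$i$j * hx$j) + xi$i * hw) \<le> 0"
            and eq: "xi$i * (w + t * hw) + 2*(\<Sum>j\<in>UNIV. a$i$j * (x + t *\<^sub>R hx) $ j)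
              = (xi$i * w + 2*(\<Sum>j\<in>UNIV. a$i$j * x $ j)) + t * ((\<Sum>j\<in>UNIV. 2 * a$i$j * hx$j) + xi$i * hw)"
            by simp_all
          then show ?thesis using lin[of i] by linarith
        qed
        moreover have "(\<Sum>j\<in>UNIV. ((x + t *\<^sub>R hx) $ j)^2) \<le> w + t * hw"
        proof -
          have "(\<Sum>j\<in>UNIV. ((x + t *\<^sub>R hx) $ j)^2) = (\<Sum>j\<in>UNIV. (x $ j)^2) + t * (2 * (\<Sum>j\<in>UNIV. x$j * hx$j)) + t^2 * ss"
            by (simp add: ss_def power2_eq_square algebra_simps sum.distrib sum_distrib_left)
          then show ?thesis using t2 by (simp add: r_def algebra_simps)
        qed
        ultimately show ?thesis by (simp add: S_def R1_feasible_def z'_def)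
      qed
      have "F z' = F z + t * (g \<bullet> h) + t^2 * q"
        by (simp add: F_def R1_obj_def z'_def zxw g_def hxw q_def inner_pair_expand power2_eq_square
            algebra_simps sum.distrib sum_distrib_left sum_subtractf)
      hence "F z' < F z" using t1 by simp
      then show False using zmin z'S by force
    qed
    obtain mu where mu0: "\<forall>i. mu i \<ge> 0" and mus: "(\<Sum>i\<in>UNIV. mu i *\<^sub>R nv i) = -g"
      using farkas_cone[of nv g] H by blast
    have s1: "(\<Sum>i\<in>UNIV. mu i * xi$i) = - D$j1"
      using arg_cong[OF mus, of snd] by (simp add: snd_sum nv_def g_def mult.commute)
    have s2: "(\<Sum>i\<in>UNIV. mu i * (2 * a$i$j)) = - (2 * ((D$j - D$j1) * x$j + c$j))" for j
      using arg_cong[OF mus, of "\<lambda>v. fst v $ j"] by (simp add: fst_sum nv_def g_def)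
    have s3: "(\<Sum>i\<in>UNIV. mu i * (2 * a$i$j)) = 2 * (\<Sum>i\<in>UNIV. a$i$j * mu i)" for j
      by (simp add: sum_distrib_left mult.commute mult.left_commute)
    have "((\<chi> i. mu i), x, w) \<in> certificate_set D c a b xi j1"
      unfolding certificate_set_def
    proof (simp, intro conjI allI impI)
      show "D $ j1 + (\<Sum>i\<in>UNIV. xi $ i * mu i) = 0" using s1 by (simp add: mult.commute)
      show "c $ j1 + (\<Sum>i\<in>UNIV. a $ i $ j1 * mu i) = 0"
        using s2[of j1] s3[of j1] by simp
      fix j assume "j \<noteq> j1"
      show "(D $ j - D $ j1) * x $ j + c $ j + (\<Sum>i\<in>UNIV. a $ i $ j * mu i) = 0"
        using s2[of j] s3[of j] by simp
    qed (use lin quad mu0 in auto)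
    then show ?thesis using assms(3) by simp
  qed
qed


end
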